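(* Let $\mathbf A\in\mathbb C^{m\times n}$, $\mathbf B\in\mathbb C^{m\times s}$, let $\mathbf X_{LS}=(x_{ij})\in\mathbb C^{n\times s}$ be the minimum norm least squares solution of $\mathbf A\mathbf X=\mathbf B$, and let $\hat{\mathbf B}=\mathbf A^{*}\mathbf B$ with $j$-th column $\hat{\mathbf b}_{.j}$. (i) If $\operatorname{rank}\mathbf A=r\le m<n$, then for all $i=1,\dots,n$, $j=1,\dots,s$, \[x_{ij}=\frac{\sum_{\beta\in J_{r,n}\{i\}}\left|\left((\mathbf A^{*}\mathbf A)_{.i}(\hat{\mathbf b}_{.j})\right)^{\beta}_{\beta}\right|}{\sum_{\beta\in J_{r,n}}\left|(\mathbf A^{*}\mathbf A)^{\beta}_{\beta}\right|}.\] (ii) If $\operatorname{rank}\mathbf A=n$, then for all $i=1,\dots,n$, $j=1,\dots,s$, $x_{ij}=\dfrac{\det\left((\mathbf A^{*}\mathbf A)_{.i}(\hat{\mathbf b}_{.j})\right)}{\det(\mathbf A^{*}\mathbf A)}$.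
   Context: $\mathbf X_{LS}$ is the matrix of minimal Frobenius norm among all $\mathbf X\in\mathbb C^{n\times s}$ minimizing the Frobenius norm $\|\mathbf A\mathbf X-\mathbf B\|$. $\mathbf M_{.i}(\mathbf c)$ denotes $\mathbf M$ with its $i$-th column replaced by $\mathbf c$. $J_{r,n}$ is the set of strictly increasing sequences of $r$ elements of $\{1,\dots,n\}$, $J_{r,n}\{i\}=\{\beta\in J_{r,n}:i\in\beta\}$, $\mathbf M^{\beta}_{\beta}$ is the principal submatrix indexed by $\beta$, $|\cdot|$ is the determinant. *)

theory Defs
  imports Complex_Main "Jordan_Normal_Form.Schur_Decomposition" "Jordan_Normal_Form.DL_Rank"
    "Jordan_Normal_Form.DL_Submatrix"
begin

definition frob_norm :: "complex mat \<Rightarrow> real" where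
  "frob_norm M = sqrt (\<Sum>i<dim_row M. \<Sum>j<dim_col M. (cmod (M $$ (i,j)))^2)"

definition min_norm_ls :: "complex mat \<Rightarrow> complex mat \<Rightarrow> complex mat \<Rightarrow> bool" where
  "min_norm_ls A B X \<longleftrightarrow>
     X \<in> carrier_mat (dim_col A) (dim_col B) \<and>
     (\<forall>Y \<in> carrier_mat (dim_col A) (dim_col B). frob_norm (A * X - B) \<le> frob_norm (A * Y - B)) \<and>
     (\<forall>Y \<in> carrier_mat (dim_col A) (dim_col B).
        frob_norm (A * Y - B) = frob_norm (A * X - B) \<longrightarrow> frob_norm X \<le> frob_norm Y)"

text \<open>J_{r,n} as sets of r indices from {0..<n} (0-based); J_{r,n}{i} those containing i.\<close>
definition J_set :: "nat \<Rightarrow> nat \<Rightarrow> nat set set" where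
  "J_set r n = {\<beta>. \<beta> \<subseteq> {0..<n} \<and> card \<beta> = r}"

definition J_set_i :: "nat \<Rightarrow> nat \<Rightarrow> nat \<Rightarrow> nat set set" where
  "J_set_i r n i = {\<beta> \<in> J_set r n. i \<in> \<beta>}"

end

theory Submission
  imports Defs
begin


definition detS :: "nat set \<Rightarrow> (nat \<Rightarrow> nat \<Rightarrow> 'a::comm_ring_1) \<Rightarrow> 'a" where
  "detS S f = (\<Sum>p | p permutes S. of_int (sign p) * (\<Prod>i\<in>S. f i (p i)))"

lemma det_detS:
  assumes "M \<in> carrier_mat n n"
  shows "det M = detS {0..<n} (\<lambda>i j. M $$ (i,j))"
  unfolding det_def'[OF assms] detS_def by simp

lemma detS_diag:
  fixes f :: "nat \<Rightarrow> nat \<Rightarrow> 'a::comm_ring_1"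
  assumes U: "finite U"
  shows "detS U (\<lambda>i j. f i j + (if i = j then t i else 0))
     = (\<Sum>\<beta>\<in>Pow U. (\<Prod>k\<in>U-\<beta>. t k) * detS \<beta> f)"
proof -
  have "detS U (\<lambda>i j. f i j + (if i = j then t i else 0))
    = (\<Sum>p | p permutes U. of_int (sign p) *
         (\<Sum>\<beta>\<in>Pow U. (\<Prod>i\<in>\<beta>. f i (p i)) * (\<Prod>i\<in>U-\<beta>. if i = p i then t i else 0)))"
    unfolding detS_def by (simp add: prod_add[OF U])
  also have "\<dots> = (\<Sum>\<beta>\<in>Pow U. \<Sum>p | p permutes U. of_int (sign p) *
         ((\<Prod>i\<in>\<beta>. f i (p i)) * (\<Prod>i\<in>U-\<beta>. if i = p i then t i else 0)))"
    by (simp add: sum_distrib_left sum.swap[of _ "Pow U"])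
  also have "\<dots> = (\<Sum>\<beta>\<in>Pow U. (\<Prod>k\<in>U-\<beta>. t k) * detS \<beta> f)"
  proof (rule sum.cong[OF refl])
    fix \<beta> assume b: "\<beta> \<in> Pow U"
    have "(\<Sum>p | p permutes U. of_int (sign p) *
         ((\<Prod>i\<in>\<beta>. f i (p i)) * (\<Prod>i\<in>U-\<beta>. if i = p i then t i else 0)))
       = (\<Sum>p | p permutes \<beta>. (\<Prod>k\<in>U-\<beta>. t k) * (of_int (sign p) * (\<Prod>i\<in>\<beta>. f i (p i))))"
    proof (rule sum.mono_neutral_cong_right)
      show "finite {p. p permutes U}" using finite_permutations[OF U] by simp
      show "{p. p permutes \<beta>} \<subseteq> {p. p permutes U}" using b permutes_subset by blast
      show "\<forall>p \<in> {p. p permutes U} - {p. p permutes \<beta>}. of_int (sign p) * ((\<Prod>i\<in>\<beta>. f i (p i)) * (\<Prod>i\<in>U-\<beta>. if i = p i then t i else 0)) = 0"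
      proof
        fix p assume p: "p \<in> {p. p permutes U} - {p. p permutes \<beta>}" 
        from p have "\<not> (\<forall>x\<in>U-\<beta>. p x = x)" using permutes_superset by blast
        then obtain x where x: "x \<in> U - \<beta>" "p x \<noteq> x" by blast
        have "(\<Prod>i\<in>U-\<beta>. if i = p i then t i else 0) = 0"
          using U x by (intro prod_zero) (auto intro!: bexI[of _ x])
        then show "of_int (sign p) * ((\<Prod>i\<in>\<beta>. f i (p i)) * (\<Prod>i\<in>U-\<beta>. if i = p i then t i else 0)) = 0" by simp
      qed
      show "of_int (sign p) * ((\<Prod>i\<in>\<beta>. f i (p i)) * (\<Prod>i\<in>U-\<beta>. if i = p i then t i else 0))
          = (\<Prod>k\<in>U-\<beta>. t k) * (of_int (sign p) * (\<Prod>i\<in>\<beta>. f i (p i)))"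
        if p: "p \<in> {p. p permutes \<beta>}" for p
      proof -
        have "(\<Prod>i\<in>U-\<beta>. if i = p i then t i else 0) = (\<Prod>k\<in>U-\<beta>. t k)"
          by (rule prod.cong) (use p in \<open>auto simp: permutes_not_in\<close>)
        then show ?thesis by (simp add: ac_simps)
      qed
    qed
    then show "(\<Sum>p | p permutes U. of_int (sign p) *
         ((\<Prod>i\<in>\<beta>. f i (p i)) * (\<Prod>i\<in>U-\<beta>. if i = p i then t i else 0)))
       = (\<Prod>k\<in>U-\<beta>. t k) * detS \<beta> f"
      unfolding detS_def by (simp add: sum_distrib_left)
  qed
  finally show ?thesis .
qed

lemma detS_col_lin:
  fixes f :: "nat \<Rightarrow> nat \<Rightarrow> 'a::comm_ring_1"
  assumes U: "finite U" and i: "i \<in> U"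
  shows "detS U (\<lambda>j k. if k = i then a j + c * b j else f j k)
    = detS U (\<lambda>j k. if k = i then a j else f j k) + c * detS U (\<lambda>j k. if k = i then b j else f j k)"
proof -
  have key: "(\<Prod>j\<in>U. (if p j = i then a j + c * b j else f j (p j)))
     = (\<Prod>j\<in>U. (if p j = i then a j else f j (p j))) + c * (\<Prod>j\<in>U. (if p j = i then b j else f j (p j)))"
    if p: "p permutes U" for p
  proof -
    obtain j0 where j0: "j0 \<in> U" "p j0 = i"
      using p i permutes_image[OF p] by (metis imageE)
    have ne: "p j \<noteq> i" if "j \<in> U - {j0}" for j
      using that j0 p by (metis DiffE insertCI permutes_inj injD)
    have R: "(\<Prod>j\<in>U. (if p j = i then g j else f j (p j))) = g j0 * (\<Prod>j\<in>U-{j0}. f j (p j))" for g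
    proof -
      have "(\<Prod>j\<in>U. (if p j = i then g j else f j (p j))) =
            (if p j0 = i then g j0 else f j0 (p j0)) * (\<Prod>j\<in>U-{j0}. (if p j = i then g j else f j (p j)))"
        by (rule prod.remove[OF U j0(1)])
      also have "(\<Prod>j\<in>U-{j0}. (if p j = i then g j else f j (p j))) = (\<Prod>j\<in>U-{j0}. f j (p j))"
        by (rule prod.cong) (use ne in auto)
      finally show ?thesis using j0 by simp
    qed
    show ?thesis unfolding R by (simp add: algebra_simps)
  qed
  show ?thesis unfolding detS_def
    by (subst sum.cong[OF refl, of _ _ "\<lambda>p. of_int (sign p) * (\<Prod>j\<in>U. (if p j = i then a j else f j (p j)))
      + c * (of_int (sign p) * (\<Prod>j\<in>U. (if p j = i then b j else f j (p j))))"])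
      (auto simp: key sum.distrib sum_distrib_left algebra_simps)
qed




lemma bij_pick:
  assumes S: "finite S"
  shows "bij_betw (pick S) {0..<card S} S"
  unfolding bij_betw_def
proof
  show "inj_on (pick S) {0..<card S}"
    by (auto simp: inj_on_def) (metis nat_neq_iff pick_mono_le)
  show "pick S ` {0..<card S} = S"
  proof
    show "pick S ` {0..<card S} \<subseteq> S" using pick_in_set_le by auto
    show "S \<subseteq> pick S ` {0..<card S}"
    proof
      fix s assume s: "s \<in> S"
      have "{a\<in>S. a < s} \<subset> S" using s by auto
      then have "card {a\<in>S. a < s} < card S" by (rule psubset_card_mono[OF S])
      moreover have "pick S (card {a\<in>S. a < s}) = s" by (rule pick_card_in_set[OF s])
      ultimately show "s \<in> pick S ` {0..<card S}"
        by (intro image_eqI[of _ _ "card {a\<in>S. a < s}"]) auto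
    qed
  qed
qed

lemma card_lt_in: "S \<subseteq> {0..<n} \<Longrightarrow> card {i. i < n \<and> i \<in> S} = card S"
  by (rule arg_cong[of _ _ card]) auto

lemma det_submatrix_detS:
  fixes M :: "'a::comm_ring_1 mat"
  assumes M: "M \<in> carrier_mat n n" and S: "S \<subseteq> {0..<n}"
  shows "det (submatrix M S S) = detS S (\<lambda>i j. M $$ (i,j))"
proof -
  define k where "k = card S"
  have fin: "finite S" using S finite_subset by blast
  have ck: "card {i. i < n \<and> i \<in> S} = k" unfolding k_def by (rule card_lt_in[OF S])
  have dims: "dim_row M = n" "dim_col M = n" using M by auto
  have sub: "submatrix M S S \<in> carrier_mat k k"
    using ck dims by (auto simp: dim_submatrix)
  have bij: "bij_betw (pick S) {0..<k} S" unfolding k_def by (rule bij_pick[OF fin])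
  hence inj: "inj_on (pick S) {0..<k}" by (rule bij_betw_imp_inj_on)
  define h where "h = (\<lambda>q. map_permutation {0..<k} (pick S) q)"
  define h' where "h' = (\<lambda>p. map_permutation S (inv_into {0..<k} (pick S)) p)"
  have hbij: "bij_betw h {q. q permutes {0..<k}} {p. p permutes S}"
  proof (rule bij_betw_byWitness[where f' = h'])
    show "\<forall>q\<in>{q. q permutes {0..<k}}. h' (h q) = q"
      unfolding h_def h'_def
      by (auto intro!: map_permutation_compose_inv[OF bij] bij_betw_inv_into_left[OF bij])
    have bij': "bij_betw (inv_into {0..<k} (pick S)) S {0..<k}" by (rule bij_betw_inv_into[OF bij])
    show "\<forall>p\<in>{p. p permutes S}. h (h' p) = p"
      unfolding h_def h'_def
      by (auto intro!: map_permutation_compose_inv[OF bij'] bij_betw_inv_into_right[OF bij])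
    show "h ` {q. q permutes {0..<k}} \<subseteq> {p. p permutes S}"
      unfolding h_def using map_permutation_permutes[OF bij] by auto
    show "h' ` {p. p permutes S} \<subseteq> {q. q permutes {0..<k}}"
      unfolding h'_def using map_permutation_permutes[OF bij'] by auto
  qed
  have "det (submatrix M S S) = (\<Sum>q | q permutes {0..<k}. of_int (sign q) *
          (\<Prod>i=0..<k. M $$ (pick S i, pick S (q i))))"
    unfolding det_def'[OF sub]
  proof (rule sum.cong[OF refl], rule arg_cong[where f = "(*) _"], rule prod.cong[OF refl])
    fix q i assume q: "q \<in> {q. q permutes {0..<k}}" and i: "i \<in> {0..<k}"
    have "q i < k" using q i permutes_in_image by fastforce
    then show "submatrix M S S $$ (i, q i) = M $$ (pick S i, pick S (q i))"
      using i by (subst submatrix_index) (auto simp: ck dims)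
  qed
  also have "\<dots> = (\<Sum>q | q permutes {0..<k}. of_int (sign (h q)) *
          (\<Prod>s\<in>S. M $$ (s, h q s)))"
  proof (rule sum.cong[OF refl])
    fix q assume q: "q \<in> {q. q permutes {0..<k}}"
    have sg: "sign (h q) = sign q" unfolding h_def
      by (rule sign_map_permutation[OF inj]) (use q in auto)
    have "(\<Prod>s\<in>S. M $$ (s, h q s)) = (\<Prod>i\<in>{0..<k}. M $$ (pick S i, h q (pick S i)))"
      by (rule prod.reindex_bij_betw[OF bij, symmetric])
    also have "\<dots> = (\<Prod>i\<in>{0..<k}. M $$ (pick S i, pick S (q i)))"
      unfolding h_def by (rule prod.cong[OF refl]) (simp add: map_permutation_apply[OF inj])
    finally show "of_int (sign q) * (\<Prod>i=0..<k. M $$ (pick S i, pick S (q i)))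
       = of_int (sign (h q)) * (\<Prod>s\<in>S. M $$ (s, h q s))" using sg by simp
  qed
  also have "\<dots> = detS S (\<lambda>i j. M $$ (i,j))"
    unfolding detS_def by (rule sum.reindex_bij_betw[OF hbij])
  finally show ?thesis .
qed




lemma (in vec_space) rank_lt_card_dep:
  assumes A: "A \<in> carrier_mat n nc" and S: "S \<subseteq> {0..<nc}" and c: "rank A < card S"
  shows "\<exists>w. (\<exists>j\<in>S. w j \<noteq> 0) \<and> (\<forall>p<n. (\<Sum>j\<in>S. A $$ (p,j) * w j) = 0)"
proof (cases "inj_on (col A) S")
  case False
  then obtain a b where ab: "a \<in> S" "b \<in> S" "a \<noteq> b" "col A a = col A b"
    unfolding inj_on_def by blast
  have fin: "finite S" using S finite_subset by blast
  define w where "w = (\<lambda>j. if j = a then 1 else if j = b then - 1 else (0::'a))"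
  have "(\<Sum>j\<in>S. A $$ (p,j) * w j) = 0" if p: "p < n" for p
  proof -
    have "a < nc" "b < nc" using ab S by auto
    moreover have "col A a $ p = col A b $ p" using ab(4) by simp
    ultimately have "A $$ (p,a) = A $$ (p,b)"
      using p A by (simp add: index_col)
    moreover have "(\<Sum>j\<in>S. A $$ (p,j) * w j) = (\<Sum>j\<in>{a,b}. A $$ (p,j) * w j)"
      by (rule sum.mono_neutral_right) (use fin ab in \<open>auto simp: w_def\<close>)
    moreover have "(\<Sum>j\<in>{a,b}. A $$ (p,j) * w j) = A $$ (p,a) - A $$ (p,b)"
      using ab(3) by (simp add: w_def)
    ultimately show ?thesis by simp
  qed
  moreover have "w a \<noteq> 0" using ab unfolding w_def by simp
  ultimately show ?thesis using ab by blast
next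
  case True
  define V where "V = col A ` S"
  have fin: "finite S" using S finite_subset by blast
  have cV: "card V = card S" unfolding V_def using True by (rule card_image)
  have Vcols: "V \<subseteq> set (cols A)" unfolding V_def using S A
    by (auto simp: cols_def)
  have Vcar: "V \<subseteq> carrier_vec n" unfolding V_def using A by auto
  have "\<not> lin_indpt V"
  proof
    assume "lin_indpt V"
    from rank_ge_card_indpt[OF A Vcols this] cV c show False by simp
  qed
  then obtain a v where av: "a \<in> V \<rightarrow> UNIV" "lincomb a V = 0\<^sub>v n" "v \<in> V" "a v \<noteq> 0"
    using finite_lin_dep[of V] fin Vcar unfolding V_def by auto
  define w where "w = (\<lambda>j. a (col A j))"
  have "(\<Sum>j\<in>S. A $$ (p,j) * w j) = 0" if p: "p < n" for p
  proof -
    have "0 = lincomb a V $ p" using av p by simp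
    also have "\<dots> = (\<Sum>x\<in>V. a x * x $ p)" by (rule lincomb_index[OF p Vcar])
    also have "\<dots> = (\<Sum>j\<in>S. a (col A j) * col A j $ p)"
      unfolding V_def by (rule sum.reindex[OF True, unfolded comp_def])
    also have "\<dots> = (\<Sum>j\<in>S. A $$ (p,j) * w j)"
      unfolding w_def using S A p by (intro sum.cong) (auto simp: mult.commute)
    finally show ?thesis by simp
  qed
  moreover obtain j where "j \<in> S" "v = col A j" using av(3) unfolding V_def by auto
  hence "\<exists>j\<in>S. w j \<noteq> 0" using av unfolding w_def by auto
  ultimately show ?thesis by blast
qed




lemma detS_cong: "(\<And>i j. i \<in> S \<Longrightarrow> j \<in> S \<Longrightarrow> f i j = g i j) \<Longrightarrow> detS S f = detS S g"
  unfolding detS_def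
  by (intro sum.cong refl arg_cong[where f = "(*) _"] prod.cong) (auto simp: permutes_in_image)

lemma det_submatrix_zero:
  fixes K :: "complex mat"
  assumes K: "K \<in> carrier_mat n n" and S: "S \<subseteq> {0..<n}"
    and w: "\<exists>j\<in>S. w j \<noteq> 0" and orth: "\<forall>k\<in>S. (\<Sum>j\<in>S. cnj (w j) * K $$ (j,k)) = 0"
  shows "det (submatrix K S S) = 0"
proof -
  define k where "k = card S"
  have fin: "finite S" using S finite_subset by blast
  have ck: "card {i. i < n \<and> i \<in> S} = k" unfolding k_def by (rule card_lt_in[OF S])
  have dims: "dim_row K = n" "dim_col K = n" using K by auto
  have sub: "submatrix K S S \<in> carrier_mat k k"
    using ck dims by (auto simp: dim_submatrix)
  have bij: "bij_betw (pick S) {0..<k} S" unfolding k_def by (rule bij_pick[OF fin])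
  define u where "u = vec k (\<lambda>l. cnj (w (pick S l)))"
  have u: "u \<in> carrier_vec k" unfolding u_def by simp
  have unz: "u \<noteq> 0\<^sub>v k"
  proof
    assume u0: "u = 0\<^sub>v k"
    from w obtain j where j: "j \<in> S" "w j \<noteq> 0" by blast
    then obtain l where l: "l < k" "pick S l = j" using bij unfolding bij_betw_def by force
    have "u $ l = cnj (w j)" unfolding u_def using l by simp
    with u0 l j show False by simp
  qed
  have "transpose_mat (submatrix K S S) *\<^sub>v u = 0\<^sub>v k"
  proof (rule eq_vecI)
    show "dim_vec (transpose_mat (submatrix K S S) *\<^sub>v u) = dim_vec (0\<^sub>v k)" using sub by simp
    fix l assume "l < dim_vec (0\<^sub>v k)"
    hence l: "l < k" by simp
    have pl: "pick S l \<in> S" using bij l unfolding bij_betw_def by auto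
    have "(transpose_mat (submatrix K S S) *\<^sub>v u) $ l = (\<Sum>l'\<in>{0..<k}. K $$ (pick S l', pick S l) * cnj (w (pick S l')))"
      using sub l u by (auto simp: scalar_prod_def u_def submatrix_index ck dims intro!: sum.cong)
    also have "\<dots> = (\<Sum>j\<in>S. K $$ (j, pick S l) * cnj (w j))"
      by (rule sum.reindex_bij_betw[OF bij])
    also have "\<dots> = 0" using orth pl by (simp add: mult.commute)
    finally show "(transpose_mat (submatrix K S S) *\<^sub>v u) $ l = 0\<^sub>v k $ l" using l by simp
  qed
  hence "det (transpose_mat (submatrix K S S)) = 0"
    using det_0_iff_vec_prod_zero[of "transpose_mat (submatrix K S S)" k] sub u unz by auto
  thus ?thesis using det_transpose[OF sub] by simp
qed




lemma (in vec_space) rank_indep_cols: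
  assumes A: "A \<in> carrier_mat n nc"
  shows "\<exists>\<beta>. \<beta> \<subseteq> {0..<nc} \<and> card \<beta> = rank A \<and>
     (\<forall>w. (\<forall>p<n. (\<Sum>j\<in>\<beta>. A $$ (p,j) * w j) = 0) \<longrightarrow> (\<forall>j\<in>\<beta>. w j = 0))"
proof -
  obtain S where S: "maximal S (\<lambda>T. T \<subseteq> set (cols A) \<and> lin_indpt T)"
    using maximal_exists[of "(\<lambda>T. T \<subseteq> set (cols A) \<and> lin_indpt T)" "card (set (cols A))" "{}"]
    by (meson List.finite_set card_mono empty_iff empty_subsetI finite_lin_indpt2 rev_finite_subset)
  have rk: "rank A = card S" by (rule rank_card_indpt[OF A S])
  have Ssub: "S \<subseteq> set (cols A)" and ind: "lin_indpt S" using S unfolding maximal_def by auto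
  have finS: "finite S" using Ssub finite_subset by blast
  have Scar: "S \<subseteq> carrier_vec n" using Ssub A cols_dim by blast
  define f where "f = (\<lambda>v. SOME j. j < nc \<and> col A j = v)"
  have f: "f v < nc \<and> col A (f v) = v" if "v \<in> S" for v
  proof -
    from that Ssub obtain j where "j < length (cols A)" "cols A ! j = v"
      by (metis in_set_conv_nth subsetD)
    hence "j < nc \<and> col A j = v" using A by auto
    thus ?thesis unfolding f_def by (rule someI)
  qed
  have inj: "inj_on f S" by (metis f inj_onI)
  define \<beta> where "\<beta> = f ` S"
  have bsub: "\<beta> \<subseteq> {0..<nc}" unfolding \<beta>_def using f by auto
  have cb: "card \<beta> = rank A" unfolding \<beta>_def rk using inj by (rule card_image)
  have "\<forall>j\<in>\<beta>. w j = 0" if w: "\<forall>p<n. (\<Sum>j\<in>\<beta>. A $$ (p,j) * w j) = 0" for w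
  proof (rule ccontr)
    assume "\<not> (\<forall>j\<in>\<beta>. w j = 0)"
    then obtain v where v: "v \<in> S" "w (f v) \<noteq> 0" unfolding \<beta>_def by auto
    define a where "a = (\<lambda>u. w (f u))"
    have "lincomb a S = 0\<^sub>v n"
    proof (rule eq_vecI)
      show "dim_vec (lincomb a S) = dim_vec (0\<^sub>v n)" using Scar by simp
      fix p assume "p < dim_vec (0\<^sub>v n)"
      hence p: "p < n" by simp
      have "lincomb a S $ p = (\<Sum>u\<in>S. a u * u $ p)" by (rule lincomb_index[OF p Scar])
      also have "\<dots> = (\<Sum>u\<in>S. A $$ (p, f u) * w (f u))"
        unfolding a_def using f A p by (intro sum.cong refl) (metis carrier_matD(1) col_def index_vec mult.commute)
      also have "\<dots> = (\<Sum>j\<in>\<beta>. A $$ (p,j) * w j)"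
        unfolding \<beta>_def by (rule sum.reindex[OF inj, unfolded comp_def, symmetric])
      also have "\<dots> = 0" using w p by simp
      finally show "lincomb a S $ p = 0\<^sub>v n $ p" using p by simp
    qed
    hence "lin_dep S" using lin_dep_crit[OF finS subset_refl _ v(1)] v(2) unfolding a_def by auto
    thus False using ind by simp
  qed
  thus ?thesis using bsub cb by blast
qed




lemma adj_carrier: "A \<in> carrier_mat m n \<Longrightarrow> mat_adjoint A \<in> carrier_mat n m"
  unfolding mat_adjoint_def by (auto simp: mat_of_rows_def)

lemma adj_index: "(A :: complex mat) \<in> carrier_mat m n \<Longrightarrow> j < n \<Longrightarrow> p < m \<Longrightarrow> mat_adjoint A $$ (j,p) = cnj (A $$ (p,j))"
  unfolding mat_adjoint_def by (auto simp: mat_of_rows_def)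

lemma gram_index:
  assumes "(A :: complex mat) \<in> carrier_mat m n" "j < n" "k < n"
  shows "(mat_adjoint A * A) $$ (j,k) = (\<Sum>p<m. cnj (A $$ (p,j)) * A $$ (p,k))"
  using assms adj_carrier[OF assms(1)]
  by (auto simp: scalar_prod_def adj_index atLeast0LessThan intro!: sum.cong)

lemma quad_form:
  fixes g :: "nat \<Rightarrow> nat \<Rightarrow> complex"
  shows "(\<Sum>a<k. cnj (v a) * (\<Sum>b<k. (\<Sum>p<m. cnj (g p a) * g p b) * v b))
       = (\<Sum>p<m. cnj (\<Sum>a<k. g p a * v a) * (\<Sum>b<k. g p b * v b))"
proof -
  have "(\<Sum>a<k. cnj (v a) * (\<Sum>b<k. (\<Sum>p<m. cnj (g p a) * g p b) * v b))
      = (\<Sum>a<k. \<Sum>b<k. \<Sum>p<m. cnj (v a) * cnj (g p a) * g p b * v b)"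
    by (simp add: sum_distrib_left sum_distrib_right mult.assoc)
  also have "\<dots> = (\<Sum>p<m. \<Sum>a<k. \<Sum>b<k. cnj (v a) * cnj (g p a) * g p b * v b)"
    by (simp add: sum.swap[of _ "{..<m}"])
  also have "\<dots> = (\<Sum>p<m. cnj (\<Sum>a<k. g p a * v a) * (\<Sum>b<k. g p b * v b))"
    by (simp add: cnj_sum sum_distrib_left sum_distrib_right mult.commute mult.left_commute)
  finally show ?thesis .
qed

lemma cnj_mult_self: "cnj z * z = complex_of_real ((cmod z)^2)"
  by (metis complex_mult_cnj complex_norm_square mult.commute)

lemma gram_quad:
  assumes G: "(G :: complex mat) \<in> carrier_mat m k" and v: "v \<in> carrier_vec k"
  shows "(\<Sum>a<k. cnj (v $ a) * ((mat_adjoint G * G) *\<^sub>v v) $ a)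
       = complex_of_real (\<Sum>p<m. (cmod ((G *\<^sub>v v) $ p))^2)"
proof -
  have H: "mat_adjoint G * G \<in> carrier_mat k k" using adj_carrier[OF G] G by auto
  have "(\<Sum>a<k. cnj (v $ a) * ((mat_adjoint G * G) *\<^sub>v v) $ a)
     = (\<Sum>a<k. cnj (v $ a) * (\<Sum>b<k. (\<Sum>p<m. cnj (G $$ (p,a)) * G $$ (p,b)) * v $ b))"
  proof (rule sum.cong[OF refl])
    fix a assume a: "a \<in> {..<k}"
    have "((mat_adjoint G * G) *\<^sub>v v) $ a = row (mat_adjoint G * G) a \<bullet> v"
      by (rule index_mult_mat_vec) (use carrier_matD(1)[OF H] a in simp)
    also have "\<dots> = (\<Sum>b\<in>{0..<k}. (mat_adjoint G * G) $$ (a,b) * v $ b)"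
    proof -
      have "row (mat_adjoint G * G) a $ x = (mat_adjoint G * G) $$ (a,x)" if "x < k" for x
        by (rule index_row) (use carrier_matD[OF H] a that in auto)
      thus ?thesis using v unfolding scalar_prod_def by (intro sum.cong) auto
    qed
    also have "\<dots> = (\<Sum>b<k. (\<Sum>p<m. cnj (G $$ (p,a)) * G $$ (p,b)) * v $ b)"
      using a by (auto simp: atLeast0LessThan gram_index[OF G] intro!: sum.cong)
    finally show "cnj (v $ a) * ((mat_adjoint G * G) *\<^sub>v v) $ a = cnj (v $ a) * (\<Sum>b<k. (\<Sum>p<m. cnj (G $$ (p,a)) * G $$ (p,b)) * v $ b)" by simp
  qed
  also have "\<dots> = (\<Sum>p<m. cnj (\<Sum>a<k. G $$ (p,a) * v $ a) * (\<Sum>b<k. G $$ (p,b) * v $ b))"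
    by (rule quad_form)
  also have "\<dots> = (\<Sum>p<m. cnj ((G *\<^sub>v v) $ p) * (G *\<^sub>v v) $ p)"
    using G v by (intro sum.cong refl) (auto simp: scalar_prod_def atLeast0LessThan)
  also have "\<dots> = complex_of_real (\<Sum>p<m. (cmod ((G *\<^sub>v v) $ p))^2)"
    by (simp add: cnj_mult_self)
  finally show ?thesis .
qed

lemma gram_det_nz:
  assumes G: "(G :: complex mat) \<in> carrier_mat m k"
    and inj: "\<And>v. v \<in> carrier_vec k \<Longrightarrow> G *\<^sub>v v = 0\<^sub>v m \<Longrightarrow> v = 0\<^sub>v k"
  shows "det (mat_adjoint G * G) \<noteq> 0"
proof
  assume d: "det (mat_adjoint G * G) = 0"
  have H: "mat_adjoint G * G \<in> carrier_mat k k" using adj_carrier[OF G] G by auto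
  obtain v where v: "v \<in> carrier_vec k" "v \<noteq> 0\<^sub>v k" "(mat_adjoint G * G) *\<^sub>v v = 0\<^sub>v k"
    using det_0_iff_vec_prod_zero[OF H] d by auto
  have "complex_of_real (\<Sum>p<m. (cmod ((G *\<^sub>v v) $ p))^2) = 0"
    unfolding gram_quad[OF G v(1), symmetric] using v(3) by simp
  hence "(\<Sum>p<m. (cmod ((G *\<^sub>v v) $ p))^2) = 0" using of_real_eq_0_iff by blast
  hence "\<forall>p\<in>{..<m}. (cmod ((G *\<^sub>v v) $ p))^2 = 0"
    by (subst sum_nonneg_eq_0_iff[symmetric]) auto
  hence "G *\<^sub>v v = 0\<^sub>v m" using G by (intro eq_vecI) auto
  with inj[OF v(1)] v(2) show False by simp
qed

lemma gram_eigen_nonneg: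
  assumes G: "(G :: complex mat) \<in> carrier_mat m k" and ev: "eigenvalue (mat_adjoint G * G) a"
  shows "0 \<le> a"
proof -
  have H: "mat_adjoint G * G \<in> carrier_mat k k" using adj_carrier[OF G] G by auto
  obtain v where v: "v \<in> carrier_vec k" "v \<noteq> 0\<^sub>v k" "(mat_adjoint G * G) *\<^sub>v v = a \<cdot>\<^sub>v v"
    using ev H unfolding eigenvalue_def eigenvector_def by auto
  have "(\<Sum>i<k. cnj (v $ i) * ((mat_adjoint G * G) *\<^sub>v v) $ i) = a * (\<Sum>i<k. cnj (v $ i) * v $ i)"
    using v by (simp add: sum_distrib_left mult.left_commute)
  also have "(\<Sum>i<k. cnj (v $ i) * v $ i) = complex_of_real (\<Sum>i<k. (cmod (v $ i))^2)"
    by (simp add: cnj_mult_self)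
  finally have eq: "a * complex_of_real (\<Sum>i<k. (cmod (v $ i))^2) = complex_of_real (\<Sum>p<m. (cmod ((G *\<^sub>v v) $ p))^2)"
    unfolding gram_quad[OF G v(1)] by simp
  define s where "s = (\<Sum>i<k. (cmod (v $ i))^2)"
  have "s \<noteq> 0"
  proof
    assume "s = 0"
    hence "\<forall>i\<in>{..<k}. (cmod (v $ i))^2 = 0" unfolding s_def
      by (subst sum_nonneg_eq_0_iff[symmetric]) auto
    hence "v = 0\<^sub>v k" using v(1) by (intro eq_vecI) auto
    with v(2) show False by simp
  qed
  moreover have "s \<ge> 0" unfolding s_def by (intro sum_nonneg) auto
  ultimately have spos: "s > 0" by simp
  have t: "(\<Sum>p<m. (cmod ((G *\<^sub>v v) $ p))^2) \<ge> 0" by (intro sum_nonneg) auto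
  from eq have "Re (a * complex_of_real s) = Re (complex_of_real (\<Sum>p<m. (cmod ((G *\<^sub>v v) $ p))^2))"
     "Im (a * complex_of_real s) = Im (complex_of_real (\<Sum>p<m. (cmod ((G *\<^sub>v v) $ p))^2))"
    unfolding s_def by simp_all
  hence "Re a * s = (\<Sum>p<m. (cmod ((G *\<^sub>v v) $ p))^2)" "Im a * s = 0" by simp_all
  then have "0 \<le> Re a * s" "Im a = 0" using t spos by simp_all
  then show ?thesis using spos
    by (auto simp: less_eq_complex_def zero_le_mult_iff)
qed

lemma gram_det_nonneg:
  assumes G: "(G :: complex mat) \<in> carrier_mat m k"
  shows "0 \<le> det (mat_adjoint G * G)"
proof -
  define H where "H = mat_adjoint G * G"
  have H: "H \<in> carrier_mat k k" using adj_carrier[OF G] G unfolding H_def by auto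
  obtain as where cp: "char_poly H = (\<Prod>a\<leftarrow>as. [:- a, 1:])" and len: "length as = k"
    using char_poly_factorized[OF H] by auto
  have "poly (char_poly H) 0 = det (- char_matrix H 0)" by (rule char_poly_matrix[OF H])
  also have "- char_matrix H 0 = (-1) \<cdot>\<^sub>m H"
    using H by (intro eq_matI) (auto simp: char_matrix_def)
  also have "det \<dots> = (-1)^k * det H" using H by simp
  finally have e1: "poly (char_poly H) 0 = (-1)^k * det H" .
  have "poly (\<Prod>a\<leftarrow>as. [:- a, 1:]) 0 = (\<Prod>a\<leftarrow>as. - a)"
    by (induction as) auto
  also have "\<dots> = (-1)^length as * prod_list as"
    by (induction as) auto
  finally have e2: "poly (char_poly H) 0 = (-1)^k * prod_list as" using cp len by simp
  have "det H = prod_list as" using e1 e2 by (metis minus_one_mult_self mult.assoc mult_1)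
  moreover have "0 \<le> prod_list as"
  proof -
   have "0 \<le> a" if "a \<in> set as" for a
   proof -
    from that have "poly (char_poly H) a = 0" unfolding cp by (induction as) auto
    hence "eigenvalue H a" using eigenvalue_root_char_poly[OF H] by simp
    thus "0 \<le> a" using gram_eigen_nonneg[OF G] unfolding H_def by simp
   qed
   moreover have "0 \<le> (1::complex)" by (simp add: less_eq_complex_def)
   ultimately show ?thesis by (induction as) (auto intro: mult_nonneg_nonneg)
  qed
  ultimately show ?thesis unfolding H_def by simp
qed




lemma frob_sq: "(frob_norm M)^2 = (\<Sum>i<dim_row M. \<Sum>j<dim_col M. (cmod (M $$ (i,j)))^2)"
  unfolding frob_norm_def by (simp add: sum_nonneg)

lemma frob_le_col:
  assumes M: "M \<in> carrier_mat a b" and M': "M' \<in> carrier_mat a b" and j: "j < b"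
    and same: "\<And>i k. i < a \<Longrightarrow> k < b \<Longrightarrow> k \<noteq> j \<Longrightarrow> M' $$ (i,k) = M $$ (i,k)"
    and le: "frob_norm M \<le> frob_norm M'"
  shows "(\<Sum>i<a. (cmod (M $$ (i,j)))^2) \<le> (\<Sum>i<a. (cmod (M' $$ (i,j)))^2)"
proof -
  have split: "(\<Sum>i<a. \<Sum>k<b. (cmod (Q $$ (i,k)))^2) = (\<Sum>i<a. (cmod (Q $$ (i,j)))^2) + (\<Sum>i<a. \<Sum>k\<in>{..<b}-{j}. (cmod (Q $$ (i,k)))^2)" for Q
  proof -
    have "(\<Sum>i<a. \<Sum>k<b. (cmod (Q $$ (i,k)))^2) = (\<Sum>i<a. (cmod (Q $$ (i,j)))^2 + (\<Sum>k\<in>{..<b}-{j}. (cmod (Q $$ (i,k)))^2))"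
      using j by (intro sum.cong refl) (simp add: sum.remove[of "{..<b}" j])
    thus ?thesis by (simp add: sum.distrib)
  qed
  have eq: "(\<Sum>i<a. \<Sum>k\<in>{..<b}-{j}. (cmod (M' $$ (i,k)))^2) = (\<Sum>i<a. \<Sum>k\<in>{..<b}-{j}. (cmod (M $$ (i,k)))^2)"
    using same by (intro sum.cong refl) auto
  have "0 \<le> frob_norm M" unfolding frob_norm_def by (simp add: sum_nonneg)
  hence "(frob_norm M)^2 \<le> (frob_norm M')^2"
    using le by (intro power_mono) auto
  hence "(\<Sum>i<a. \<Sum>k<b. (cmod (M $$ (i,k)))^2) \<le> (\<Sum>i<a. \<Sum>k<b. (cmod (M' $$ (i,k)))^2)"
    unfolding frob_sq using M M' by simp
  thus ?thesis unfolding split eq by simp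
qed

lemma cmod_add_sq: "(cmod (x + y))^2 = (cmod x)^2 + 2 * Re (cnj x * y) + (cmod y)^2"
  unfolding cmod_power2 by (simp add: power2_sum algebra_simps)

lemma perturb:
  fixes f g :: "nat \<Rightarrow> complex"
  assumes le: "\<And>t. (\<Sum>i<a. (cmod (f i))^2) \<le> (\<Sum>i<a. (cmod (f i + t * g i))^2)"
  shows "(\<Sum>i<a. cnj (g i) * f i) = 0"
proof -
  define \<alpha> where "\<alpha> = (\<Sum>i<a. cnj (g i) * f i)"
  define s where "s = (\<Sum>i<a. (cmod (g i))^2)"
  have s0: "s \<ge> 0" unfolding s_def by (intro sum_nonneg) auto
  define \<epsilon> where "\<epsilon> = 1 / (s + 1)"
  have e0: "\<epsilon> > 0" unfolding \<epsilon>_def using s0 by simp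
  have es: "\<epsilon> * s < 1" unfolding \<epsilon>_def using s0 by (simp add: field_simps)
  define t where "t = - complex_of_real \<epsilon> * \<alpha>"
  have "(\<Sum>i<a. (cmod (f i + t * g i))^2)
     = (\<Sum>i<a. (cmod (f i))^2 + 2 * Re (t * (cnj (f i) * g i)) + (cmod t)^2 * (cmod (g i))^2)"
    by (intro sum.cong refl) (simp add: cmod_add_sq norm_mult power_mult_distrib mult.left_commute)
  also have "\<dots> = (\<Sum>i<a. (cmod (f i))^2) + 2 * Re (t * (\<Sum>i<a. cnj (f i) * g i)) + (cmod t)^2 * s"
    unfolding s_def by (simp add: sum.distrib sum_distrib_left Re_sum)
  also have "(\<Sum>i<a. cnj (f i) * g i) = cnj \<alpha>"
    unfolding \<alpha>_def by (simp add: cnj_sum mult.commute)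
  also have "Re (t * cnj \<alpha>) = - \<epsilon> * (cmod \<alpha>)^2"
    unfolding t_def by (simp add: mult.assoc complex_mult_cnj cmod_power2)
  also have "(cmod t)^2 = \<epsilon>^2 * (cmod \<alpha>)^2"
    unfolding t_def using e0 by (simp add: norm_mult power_mult_distrib)
  finally have "(\<Sum>i<a. (cmod (f i + t * g i))^2) = (\<Sum>i<a. (cmod (f i))^2) + \<epsilon> * (cmod \<alpha>)^2 * (\<epsilon> * s - 2)"
    by (simp add: algebra_simps power2_eq_square)
  with le[of t] have "0 \<le> \<epsilon> * (cmod \<alpha>)^2 * (\<epsilon> * s - 2)" by simp
  moreover have "\<epsilon> * s - 2 < 0" using es by simp
  moreover have "\<epsilon> * (cmod \<alpha>)^2 \<ge> 0" using e0 by simp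
  ultimately have "\<epsilon> * (cmod \<alpha>)^2 * (\<epsilon> * s - 2) = 0"
    using mult_nonneg_nonpos[of "\<epsilon> * (cmod \<alpha>)^2" "\<epsilon> * s - 2"] by linarith
  hence "\<alpha> = 0" using e0 \<open>\<epsilon> * s - 2 < 0\<close> by simp
  thus ?thesis unfolding \<alpha>_def .
qed

lemma mult_minus_index:
  assumes A: "(A::complex mat) \<in> carrier_mat m n" and Y: "Y \<in> carrier_mat n s" and B: "B \<in> carrier_mat m s"
    and p: "p < m" and k: "k < s"
  shows "(A * Y - B) $$ (p,k) = (\<Sum>l<n. A $$ (p,l) * Y $$ (l,k)) - B $$ (p,k)"
  using A Y B p k by (auto simp: scalar_prod_def atLeast0LessThan intro!: sum.cong)

lemma LS_normal:
  assumes A: "A \<in> carrier_mat m n" and B: "B \<in> carrier_mat m s" and X: "min_norm_ls A B X"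
    and j: "j < s" and l0: "l0 < n"
  shows "(\<Sum>p<m. cnj (A $$ (p,l0)) * ((\<Sum>l<n. A $$ (p,l) * X $$ (l,j)) - B $$ (p,j))) = 0"
proof -
  have Xc: "X \<in> carrier_mat n s" using X A B unfolding min_norm_ls_def by auto
  have opt: "\<And>Y. Y \<in> carrier_mat n s \<Longrightarrow> frob_norm (A * X - B) \<le> frob_norm (A * Y - B)"
    using X A B unfolding min_norm_ls_def by auto
  define r where "r = (\<lambda>p. (\<Sum>l<n. A $$ (p,l) * X $$ (l,j)) - B $$ (p,j))"
  have "(\<Sum>p<m. cnj (A $$ (p,l0)) * r p) = 0"
  proof (rule perturb)
    fix t :: complex
    define Y where "Y = mat n s (\<lambda>(i,k). if i = l0 \<and> k = j then X $$ (i,k) + t else X $$ (i,k))"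
    have Yc: "Y \<in> carrier_mat n s" unfolding Y_def by simp
    have 1: "A * X - B \<in> carrier_mat m s" "A * Y - B \<in> carrier_mat m s" using A B Xc Yc by auto
    have same: "(A * Y - B) $$ (p,k) = (A * X - B) $$ (p,k)" if "p < m" "k < s" "k \<noteq> j" for p k
      unfolding mult_minus_index[OF A Yc B that(1,2)] mult_minus_index[OF A Xc B that(1,2)]
      using that by (auto simp: Y_def intro!: sum.cong)
    have colY: "(A * Y - B) $$ (p,j) = r p + t * A $$ (p,l0)" if "p < m" for p
    proof -
      have "(\<Sum>l<n. A $$ (p,l) * Y $$ (l,j)) = (\<Sum>l<n. A $$ (p,l) * X $$ (l,j) + (if l = l0 then A $$ (p,l0) * t else 0))"
        using j by (intro sum.cong refl) (auto simp: Y_def algebra_simps)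
      also have "\<dots> = (\<Sum>l<n. A $$ (p,l) * X $$ (l,j)) + A $$ (p,l0) * t"
        using l0 by (simp add: sum.distrib)
      finally show ?thesis unfolding mult_minus_index[OF A Yc B that j] r_def by (simp add: algebra_simps)
    qed
    have colX: "(A * X - B) $$ (p,j) = r p" if "p < m" for p
      unfolding mult_minus_index[OF A Xc B that j] r_def ..
    from frob_le_col[OF 1 j same opt[OF Yc]]
    show "(\<Sum>p<m. (cmod (r p))^2) \<le> (\<Sum>p<m. (cmod (r p + t * A $$ (p,l0)))^2)"
      using colX colY by simp
  qed
  thus ?thesis unfolding r_def .
qed

lemma LS_orth:
  assumes A: "A \<in> carrier_mat m n" and B: "B \<in> carrier_mat m s" and X: "min_norm_ls A B X"
    and j: "j < s" and v: "\<forall>p<m. (\<Sum>l<n. A $$ (p,l) * v l) = 0"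
  shows "(\<Sum>i<n. cnj (v i) * X $$ (i,j)) = 0"
proof (rule perturb)
  have Xc: "X \<in> carrier_mat n s" using X A B unfolding min_norm_ls_def by auto
  have mn: "\<And>Y. Y \<in> carrier_mat n s \<Longrightarrow> frob_norm (A * Y - B) = frob_norm (A * X - B) \<Longrightarrow> frob_norm X \<le> frob_norm Y"
    using X A B unfolding min_norm_ls_def by auto
  fix t :: complex
  define Y where "Y = mat n s (\<lambda>(i,k). if k = j then X $$ (i,k) + t * v i else X $$ (i,k))"
  have Yc: "Y \<in> carrier_mat n s" unfolding Y_def by simp
  have "A * Y - B = A * X - B"
  proof (rule eq_matI)
    fix p k assume pk: "p < dim_row (A * X - B)" "k < dim_col (A * X - B)"
    hence p: "p < m" and k: "k < s" using A B Xc by auto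
    have "(\<Sum>l<n. A $$ (p,l) * Y $$ (l,k)) = (\<Sum>l<n. A $$ (p,l) * X $$ (l,k)) + (if k = j then t * (\<Sum>l<n. A $$ (p,l) * v l) else 0)"
      using k by (auto simp: Y_def algebra_simps sum.distrib sum_distrib_left intro!: sum.cong)
    also have "\<dots> = (\<Sum>l<n. A $$ (p,l) * X $$ (l,k))" using v p by simp
    finally show "(A * Y - B) $$ (p,k) = (A * X - B) $$ (p,k)"
      unfolding mult_minus_index[OF A Yc B p k] mult_minus_index[OF A Xc B p k] by simp
  qed (use A B Xc Yc in auto)
  hence le: "frob_norm X \<le> frob_norm Y" using mn[OF Yc] by simp
  have same: "Y $$ (i,k) = X $$ (i,k)" if "i < n" "k < s" "k \<noteq> j" for i k
    using that by (simp add: Y_def)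
  from frob_le_col[OF Xc Yc j same le]
  show "(\<Sum>i<n. (cmod (X $$ (i,j)))^2) \<le> (\<Sum>i<n. (cmod (X $$ (i,j) + t * v i))^2)"
    using j by (simp add: Y_def)
qed




lemma sub_gram:
  assumes A: "(A::complex mat) \<in> carrier_mat m n" and S: "S \<subseteq> {0..<n}"
  shows "submatrix (mat_adjoint A * A) S S = mat_adjoint (submatrix A UNIV S) * submatrix A UNIV S"
proof -
  define k where "k = card S"
  have ck: "card {i. i < n \<and> i \<in> S} = k" unfolding k_def by (rule card_lt_in[OF S])
  have cm: "card {i. i < m \<and> i \<in> UNIV} = m" by simp
  have G: "submatrix A UNIV S \<in> carrier_mat m k" using A ck cm by (auto simp: dim_submatrix)
  have N: "mat_adjoint A * A \<in> carrier_mat n n" using adj_carrier[OF A] A by auto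
  have fin: "finite S" using S finite_subset by blast
  have bij: "bij_betw (pick S) {0..<k} S" unfolding k_def by (rule bij_pick[OF fin])
  have pk: "pick S a < n" if "a < k" for a
  proof -
    have "pick S a \<in> pick S ` {0..<k}" using that by auto
    also have "\<dots> = S" using bij unfolding bij_betw_def by auto
    finally show ?thesis using S by auto
  qed
  show ?thesis
  proof (rule eq_matI)
    fix a b assume ab: "a < dim_row (mat_adjoint (submatrix A UNIV S) * submatrix A UNIV S)"
      "b < dim_col (mat_adjoint (submatrix A UNIV S) * submatrix A UNIV S)"
    hence a: "a < k" and b: "b < k" using G adj_carrier[OF G] by auto
    have "submatrix (mat_adjoint A * A) S S $$ (a,b) = (mat_adjoint A * A) $$ (pick S a, pick S b)"
      using N a b ck by (subst submatrix_index) auto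
    also have "\<dots> = (\<Sum>p<m. cnj (A $$ (p, pick S a)) * A $$ (p, pick S b))"
      by (rule gram_index[OF A pk[OF a] pk[OF b]])
    also have "\<dots> = (mat_adjoint (submatrix A UNIV S) * submatrix A UNIV S) $$ (a,b)"
      unfolding gram_index[OF G a b] using A ck a b
      by (intro sum.cong refl) (auto simp: submatrix_index pick_UNIV)
    finally show "submatrix (mat_adjoint A * A) S S $$ (a,b) = (mat_adjoint (submatrix A UNIV S) * submatrix A UNIV S) $$ (a,b)" .
  qed (use G adj_carrier[OF G] N ck in \<open>auto simp: dim_submatrix\<close>)
qed

lemma indep_to_kernel:
  assumes A: "(A::complex mat) \<in> carrier_mat m n" and S: "S \<subseteq> {0..<n}"
    and ind: "\<forall>w. (\<forall>p<m. (\<Sum>j\<in>S. A $$ (p,j) * w j) = 0) \<longrightarrow> (\<forall>j\<in>S. w j = 0)"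
    and v: "v \<in> carrier_vec (card S)" and Gv: "submatrix A UNIV S *\<^sub>v v = 0\<^sub>v m"
  shows "v = 0\<^sub>v (card S)"
proof -
  define k where "k = card S"
  have ck: "card {i. i < n \<and> i \<in> S} = k" unfolding k_def by (rule card_lt_in[OF S])
  have cm: "card {i. i < m \<and> i \<in> UNIV} = m" by simp
  have G: "submatrix A UNIV S \<in> carrier_mat m k" using A ck cm by (auto simp: dim_submatrix)
  have fin: "finite S" using S finite_subset by blast
  have bij: "bij_betw (pick S) {0..<k} S" unfolding k_def by (rule bij_pick[OF fin])
  define w where "w = (\<lambda>a. v $ (inv_into {0..<k} (pick S) a))"
  have wp: "w (pick S l) = v $ l" if "l < k" for l
    unfolding w_def using bij_betw_inv_into_left[OF bij] that by simp
  have "(\<Sum>j\<in>S. A $$ (p,j) * w j) = 0" if p: "p < m" for p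
  proof -
    have "(\<Sum>j\<in>S. A $$ (p,j) * w j) = (\<Sum>l\<in>{0..<k}. A $$ (p, pick S l) * w (pick S l))"
      by (rule sum.reindex_bij_betw[OF bij, symmetric])
    also have "\<dots> = (submatrix A UNIV S *\<^sub>v v) $ p"
      using G p v A ck unfolding k_def[symmetric]
      by (auto simp: scalar_prod_def wp submatrix_index pick_UNIV intro!: sum.cong)
    also have "\<dots> = 0" using Gv p by simp
    finally show ?thesis .
  qed
  hence w0: "\<forall>j\<in>S. w j = 0" using ind by blast
  show ?thesis
  proof (rule eq_vecI)
    fix l assume "l < dim_vec (0\<^sub>v (card S))"
    hence l: "l < k" unfolding k_def by simp
    have "pick S l \<in> S" using bij l unfolding bij_betw_def by auto
    thus "v $ l = 0\<^sub>v (card S) $ l" using w0 wp[OF l] l unfolding k_def by simp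
  qed (use v in simp)
qed

lemma gram_principal_nonneg:
  assumes A: "(A::complex mat) \<in> carrier_mat m n" and S: "S \<subseteq> {0..<n}"
  shows "0 \<le> det (submatrix (mat_adjoint A * A) S S)"
proof -
  have G: "submatrix A UNIV S \<in> carrier_mat m (card S)"
    using A card_lt_in[OF S] by (auto simp: dim_submatrix)
  show ?thesis unfolding sub_gram[OF A S] by (rule gram_det_nonneg[OF G])
qed

lemma gram_principal_nz:
  assumes A: "(A::complex mat) \<in> carrier_mat m n" and S: "S \<subseteq> {0..<n}"
    and ind: "\<forall>w. (\<forall>p<m. (\<Sum>j\<in>S. A $$ (p,j) * w j) = 0) \<longrightarrow> (\<forall>j\<in>S. w j = 0)"
  shows "det (submatrix (mat_adjoint A * A) S S) \<noteq> 0"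
proof -
  have G: "submatrix A UNIV S \<in> carrier_mat m (card S)"
    using A card_lt_in[OF S] by (auto simp: dim_submatrix)
  show ?thesis unfolding sub_gram[OF A S]
    by (rule gram_det_nz[OF G]) (rule indep_to_kernel[OF A S ind])
qed

lemma dsum_nz:
  assumes A: "(A::complex mat) \<in> carrier_mat m n"
  shows "(\<Sum>\<beta>\<in>J_set (vec_space.rank m A) n. det (submatrix (mat_adjoint A * A) \<beta> \<beta>)) \<noteq> 0"
proof -
  obtain \<beta> where b: "\<beta> \<subseteq> {0..<n}" "card \<beta> = vec_space.rank m A"
    "\<forall>w. (\<forall>p<m. (\<Sum>j\<in>\<beta>. A $$ (p,j) * w j) = 0) \<longrightarrow> (\<forall>j\<in>\<beta>. w j = 0)"
    using vec_space.rank_indep_cols[OF A] by blast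
  have bJ: "\<beta> \<in> J_set (vec_space.rank m A) n" using b unfolding J_set_def by auto
  have fin: "finite (J_set (vec_space.rank m A) n)"
    by (rule finite_subset[of _ "Pow {0..<n}"]) (auto simp: J_set_def)
  have nn: "0 \<le> det (submatrix (mat_adjoint A * A) \<gamma> \<gamma>)" if "\<gamma> \<in> J_set (vec_space.rank m A) n" for \<gamma>
    using that gram_principal_nonneg[OF A] unfolding J_set_def by auto
  have nz: "det (submatrix (mat_adjoint A * A) \<beta> \<beta>) \<noteq> 0" by (rule gram_principal_nz[OF A b(1) b(3)])
  have "det (submatrix (mat_adjoint A * A) \<beta> \<beta>) \<le> (\<Sum>\<beta>\<in>J_set (vec_space.rank m A) n. det (submatrix (mat_adjoint A * A) \<beta> \<beta>))"
    by (rule member_le_sum[OF bJ nn fin]) auto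
  moreover have "0 < det (submatrix (mat_adjoint A * A) \<beta> \<beta>)" using nn[OF bJ] nz by (simp add: order_less_le)
  ultimately show ?thesis by auto
qed

lemma vanish:
  assumes A: "(A::complex mat) \<in> carrier_mat m n" and K: "K \<in> carrier_mat n n"
    and orth: "\<And>v k. (\<forall>p<m. (\<Sum>l<n. A $$ (p,l) * v l) = 0) \<Longrightarrow> k < n \<Longrightarrow> (\<Sum>l<n. cnj (v l) * K $$ (l,k)) = 0"
    and S: "S \<subseteq> {0..<n}" and c: "vec_space.rank m A < card S"
  shows "det (submatrix K S S) = 0"
proof -
  obtain w where w: "\<exists>j\<in>S. w j \<noteq> 0" "\<forall>p<m. (\<Sum>j\<in>S. A $$ (p,j) * w j) = 0"
    using vec_space.rank_lt_card_dep[OF A S c] by blast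
  define v where "v = (\<lambda>l. if l \<in> S then w l else 0)"
  have sv: "(\<Sum>l<n. f l * v l) = (\<Sum>j\<in>S. f j * w j)" for f :: "nat \<Rightarrow> complex"
  proof -
    have "(\<Sum>l<n. f l * v l) = (\<Sum>l\<in>S. f l * v l)"
      using S by (intro sum.mono_neutral_right) (auto simp: v_def)
    thus ?thesis by (simp add: v_def)
  qed
  have sv': "(\<Sum>l<n. cnj (v l) * f l) = (\<Sum>j\<in>S. cnj (w j) * f j)" for f :: "nat \<Rightarrow> complex"
  proof -
    have "(\<Sum>l<n. cnj (v l) * f l) = (\<Sum>l\<in>S. cnj (v l) * f l)"
      using S by (intro sum.mono_neutral_right) (auto simp: v_def)
    thus ?thesis by (simp add: v_def)
  qed
  have "\<forall>k\<in>S. (\<Sum>j\<in>S. cnj (w j) * K $$ (j,k)) = 0"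
  proof
    fix k assume "k \<in> S"
    hence "k < n" using S by auto
    from orth[of v, OF _ this] w(2) show "(\<Sum>j\<in>S. cnj (w j) * K $$ (j,k)) = 0"
      unfolding sv sv' by simp
  qed
  thus ?thesis by (rule det_submatrix_zero[OF K S w(1)])
qed




lemma expand_diag:
  fixes N :: "complex mat"
  shows "detS {0..<n} (\<lambda>a b. N $$ (a,b) + (if a = b then z else 0))
    = (\<Sum>\<beta>\<in>Pow {0..<n}. z ^ (n - card \<beta>) * detS \<beta> (\<lambda>a b. N $$ (a,b)))"
  unfolding detS_diag[OF finite_atLeastLessThan]
proof (rule sum.cong[OF refl])
  fix \<beta> assume b: "\<beta> \<in> Pow {0..<n}"
  have "card ({0..<n} - \<beta>) = n - card \<beta>" using b by (subst card_Diff_subset) (auto intro: finite_subset)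
  thus "(\<Prod>k\<in>{0..<n} - \<beta>. z) * detS \<beta> (\<lambda>a b. N $$ (a,b)) = z ^ (n - card \<beta>) * detS \<beta> (\<lambda>a b. N $$ (a,b))"
    by simp
qed

lemma expand_rc:
  fixes N :: "complex mat" and y :: "nat \<Rightarrow> complex"
  assumes i: "i < n"
  shows "detS {0..<n} (\<lambda>a b. if b = i then y a else N $$ (a,b) + (if a = b then z else 0))
    = (\<Sum>\<beta>\<in>Pow {0..<n}. z ^ (n - card \<beta>) * (if i \<in> \<beta> then detS \<beta> (\<lambda>a b. if b = i then y a else N $$ (a,b)) else 0))"
proof -
  define t where "t = (\<lambda>a. if a = i then 0 else z)"
  have "detS {0..<n} (\<lambda>a b. if b = i then y a else N $$ (a,b) + (if a = b then z else 0))
      = detS {0..<n} (\<lambda>a b. (if b = i then y a else N $$ (a,b)) + (if a = b then t a else 0))"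
    by (rule detS_cong) (auto simp: t_def)
  also have "\<dots> = (\<Sum>\<beta>\<in>Pow {0..<n}. (\<Prod>k\<in>{0..<n} - \<beta>. t k) * detS \<beta> (\<lambda>a b. if b = i then y a else N $$ (a,b)))"
    by (rule detS_diag[OF finite_atLeastLessThan])
  also have "\<dots> = (\<Sum>\<beta>\<in>Pow {0..<n}. z ^ (n - card \<beta>) * (if i \<in> \<beta> then detS \<beta> (\<lambda>a b. if b = i then y a else N $$ (a,b)) else 0))"
  proof (rule sum.cong[OF refl])
    fix \<beta> assume b: "\<beta> \<in> Pow {0..<n}"
    show "(\<Prod>k\<in>{0..<n} - \<beta>. t k) * detS \<beta> (\<lambda>a b. if b = i then y a else N $$ (a,b))
      = z ^ (n - card \<beta>) * (if i \<in> \<beta> then detS \<beta> (\<lambda>a b. if b = i then y a else N $$ (a,b)) else 0)"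
    proof (cases "i \<in> \<beta>")
      case True
      have "(\<Prod>k\<in>{0..<n} - \<beta>. t k) = (\<Prod>k\<in>{0..<n} - \<beta>. z)"
        using True by (intro prod.cong) (auto simp: t_def)
      also have "\<dots> = z ^ (n - card \<beta>)"
        using b by (simp, subst card_Diff_subset) (auto intro: finite_subset)
      finally show ?thesis using True by simp
    next
      case False
      have "(\<Prod>k\<in>{0..<n} - \<beta>. t k) = 0"
        using False i by (intro prod_zero) (auto simp: t_def intro!: bexI[of _ i])
      thus ?thesis using False by simp
    qed
  qed
  finally show ?thesis .
qed

lemma replace_col_index:
  "A \<in> carrier_mat n n \<Longrightarrow> a < n \<Longrightarrow> b < n \<Longrightarrow> replace_col A v i $$ (a,b) = (if b = i then v $ a else A $$ (a,b))"
  unfolding replace_col_def by auto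

lemma replace_col_carrier: "A \<in> carrier_mat n n \<Longrightarrow> replace_col A v i \<in> carrier_mat n n"
  unfolding replace_col_def by auto

lemma isCont_zero:
  fixes \<Phi> :: "complex \<Rightarrow> complex"
  assumes c: "isCont \<Phi> 0" and z: "\<And>z. z \<noteq> 0 \<Longrightarrow> \<Phi> z = 0"
  shows "\<Phi> 0 = 0"
proof -
  have 1: "(\<Phi> \<longlongrightarrow> \<Phi> 0) (at 0)" using c unfolding isCont_def .
  have ev: "eventually (\<lambda>x. 0 = \<Phi> x) (at (0::complex))"
    unfolding eventually_at_filter using z by simp
  have 2: "(\<Phi> \<longlongrightarrow> 0) (at 0)" by (rule Lim_transform_eventually[OF tendsto_const ev])
  show ?thesis using tendsto_unique[OF at_neq_bot 1 2] .
qed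

lemma general_formula:
  fixes A B X :: "complex mat"
  assumes A: "A \<in> carrier_mat m n" and B: "B \<in> carrier_mat m s" and X: "min_norm_ls A B X"
    and i: "i < n" and j: "j < s"
  shows "X $$ (i,j) =
     (\<Sum>\<beta>\<in>J_set_i (vec_space.rank m A) n i.
        det (submatrix (replace_col (mat_adjoint A * A) (col (mat_adjoint A * B) j) i) \<beta> \<beta>))
     / (\<Sum>\<beta>\<in>J_set (vec_space.rank m A) n. det (submatrix (mat_adjoint A * A) \<beta> \<beta>))"
proof -
  define r where "r = vec_space.rank m A"
  define N where "N = mat_adjoint A * A"
  define cv where "cv = col (mat_adjoint A * B) j"
  define xv where "xv = col X j"
  define U where "U = {0..<n}"
  have Nc: "N \<in> carrier_mat n n" unfolding N_def using adj_carrier[OF A] A by auto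
  have Xc: "X \<in> carrier_mat n s" using X A B unfolding min_norm_ls_def by auto
  have AB: "mat_adjoint A * B \<in> carrier_mat n s" using adj_carrier[OF A] B by auto
  have cvc: "cv \<in> carrier_vec n" unfolding cv_def using AB j by auto
  have xvc: "xv \<in> carrier_vec n" unfolding xv_def using Xc j by auto
  have rn: "r \<le> n" unfolding r_def by (rule vec_space.rank_le_nc[OF A])
  have Nidx: "N $$ (a,b) = (\<Sum>p<m. cnj (A $$ (p,a)) * A $$ (p,b))" if "a < n" "b < n" for a b
    unfolding N_def by (rule gram_index[OF A that])
  have cidx: "cv $ a = (\<Sum>p<m. cnj (A $$ (p,a)) * B $$ (p,j))" if a: "a < n" for a
  proof -
    have "cv $ a = (mat_adjoint A * B) $$ (a,j)" unfolding cv_def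
      by (rule index_col) (use carrier_matD[OF AB] a j in auto)
    also have "\<dots> = row (mat_adjoint A) a \<bullet> col B j"
      by (rule index_mult_mat) (use adj_carrier[OF A] B a j in auto)
    also have "\<dots> = (\<Sum>p<m. cnj (A $$ (p,a)) * B $$ (p,j))"
      unfolding scalar_prod_def using adj_carrier[OF A] A B a j
      by (auto simp: adj_index atLeast0LessThan intro!: sum.cong)
    finally show ?thesis .
  qed
  have xidx: "xv $ a = X $$ (a,j)" if "a < n" for a unfolding xv_def using Xc j that by simp
  have NE: "(\<Sum>k<n. N $$ (a,k) * xv $ k) = cv $ a" if a: "a < n" for a
  proof -
    have 0: "(\<Sum>p<m. cnj (A $$ (p,a)) * ((\<Sum>l<n. A $$ (p,l) * X $$ (l,j)) - B $$ (p,j))) = 0"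
      by (rule LS_normal[OF A B X j a])
    have "(\<Sum>k<n. N $$ (a,k) * xv $ k) = (\<Sum>k<n. \<Sum>p<m. cnj (A $$ (p,a)) * A $$ (p,k) * X $$ (k,j))"
      using a by (auto simp: Nidx xidx sum_distrib_right intro!: sum.cong)
    also have "\<dots> = (\<Sum>p<m. cnj (A $$ (p,a)) * (\<Sum>l<n. A $$ (p,l) * X $$ (l,j)))"
      by (simp add: sum.swap[of _ "{..<n}"] sum_distrib_left mult.assoc)
    also have "\<dots> = (\<Sum>p<m. cnj (A $$ (p,a)) * B $$ (p,j))"
      using 0 by (simp add: right_diff_distrib sum_subtractf)
    finally show ?thesis using cidx[OF a] by simp
  qed
  have ker_lemma: "(\<Sum>l<n. cnj (v l) * (\<Sum>p<m. cnj (A $$ (p,l)) * g p)) = 0"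
    if v: "\<forall>p<m. (\<Sum>l<n. A $$ (p,l) * v l) = 0" for v g
  proof -
    have "(\<Sum>l<n. cnj (v l) * (\<Sum>p<m. cnj (A $$ (p,l)) * g p)) = (\<Sum>p<m. cnj (\<Sum>l<n. A $$ (p,l) * v l) * g p)"
      by (simp add: sum_distrib_left sum_distrib_right cnj_sum sum.swap[of _ "{..<n}"] mult.commute mult.left_commute)
    also have "\<dots> = 0" using v by simp
    finally show ?thesis .
  qed
  have ON: "(\<Sum>l<n. cnj (v l) * N $$ (l,k)) = 0"
    if v: "\<forall>p<m. (\<Sum>l<n. A $$ (p,l) * v l) = 0" and k: "k < n" for v k
    using ker_lemma[OF v, of "\<lambda>p. A $$ (p,k)"] k by (simp add: Nidx)
  have OC: "(\<Sum>l<n. cnj (v l) * cv $ l) = 0"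
    if v: "\<forall>p<m. (\<Sum>l<n. A $$ (p,l) * v l) = 0" for v
    using ker_lemma[OF v, of "\<lambda>p. B $$ (p,j)"] by (simp add: cidx)
  have OX: "(\<Sum>l<n. cnj (v l) * xv $ l) = 0"
    if v: "\<forall>p<m. (\<Sum>l<n. A $$ (p,l) * v l) = 0" for v
    using LS_orth[OF A B X j v] by (simp add: xidx)
  define Kc where "Kc = replace_col N cv i"
  define Kx where "Kx = replace_col N xv i"
  have Kcc: "Kc \<in> carrier_mat n n" unfolding Kc_def by (rule replace_col_carrier[OF Nc])
  have Kxc: "Kx \<in> carrier_mat n n" unfolding Kx_def by (rule replace_col_carrier[OF Nc])
  have OKc: "(\<Sum>l<n. cnj (v l) * Kc $$ (l,k)) = 0"
    if v: "\<forall>p<m. (\<Sum>l<n. A $$ (p,l) * v l) = 0" and k: "k < n" for v k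
  proof -
    have "(\<Sum>l<n. cnj (v l) * Kc $$ (l,k)) = (\<Sum>l<n. cnj (v l) * (if k = i then cv $ l else N $$ (l,k)))"
      unfolding Kc_def using k by (intro sum.cong refl) (simp add: replace_col_index[OF Nc])
    thus ?thesis using ON[OF v k] OC[OF v] by (cases "k = i") auto
  qed
  have OKx: "(\<Sum>l<n. cnj (v l) * Kx $$ (l,k)) = 0"
    if v: "\<forall>p<m. (\<Sum>l<n. A $$ (p,l) * v l) = 0" and k: "k < n" for v k
  proof -
    have "(\<Sum>l<n. cnj (v l) * Kx $$ (l,k)) = (\<Sum>l<n. cnj (v l) * (if k = i then xv $ l else N $$ (l,k)))"
      unfolding Kx_def using k by (intro sum.cong refl) (simp add: replace_col_index[OF Nc])
    thus ?thesis using ON[OF v k] OX[OF v] by (cases "k = i") auto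
  qed
  define D where "D = (\<lambda>\<beta>. detS \<beta> (\<lambda>a b. N $$ (a,b)))"
  define E where "E = (\<lambda>\<beta>. if i \<in> \<beta> then detS \<beta> (\<lambda>a b. if b = i then cv $ a else N $$ (a,b)) else 0)"
  define F where "F = (\<lambda>\<beta>. if i \<in> \<beta> then detS \<beta> (\<lambda>a b. if b = i then xv $ a else N $$ (a,b)) else 0)"
  have Ddet: "D \<beta> = det (submatrix N \<beta> \<beta>)" if "\<beta> \<subseteq> U" for \<beta>
    unfolding D_def U_def using det_submatrix_detS[OF Nc] that U_def by simp
  have Kcdet: "detS \<beta> (\<lambda>a b. if b = i then cv $ a else N $$ (a,b)) = det (submatrix Kc \<beta> \<beta>)" if b: "\<beta> \<subseteq> U" for \<beta>
  proof -
    have "det (submatrix Kc \<beta> \<beta>) = detS \<beta> (\<lambda>a b. Kc $$ (a,b))" using det_submatrix_detS[OF Kcc] b U_def by simp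
    also have "\<dots> = detS \<beta> (\<lambda>a b. if b = i then cv $ a else N $$ (a,b))"
    proof (rule detS_cong)
      fix a b' assume "a \<in> \<beta>" "b' \<in> \<beta>"
      hence "a < n" "b' < n" using b unfolding U_def by auto
      thus "Kc $$ (a,b') = (if b' = i then cv $ a else N $$ (a,b'))"
        unfolding Kc_def by (rule replace_col_index[OF Nc])
    qed
    finally show ?thesis by simp
  qed
  have Kxdet: "detS \<beta> (\<lambda>a b. if b = i then xv $ a else N $$ (a,b)) = det (submatrix Kx \<beta> \<beta>)" if b: "\<beta> \<subseteq> U" for \<beta>
  proof -
    have "det (submatrix Kx \<beta> \<beta>) = detS \<beta> (\<lambda>a b. Kx $$ (a,b))" using det_submatrix_detS[OF Kxc] b U_def by simp
    also have "\<dots> = detS \<beta> (\<lambda>a b. if b = i then xv $ a else N $$ (a,b))"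
    proof (rule detS_cong)
      fix a b' assume "a \<in> \<beta>" "b' \<in> \<beta>"
      hence "a < n" "b' < n" using b unfolding U_def by auto
      thus "Kx $$ (a,b') = (if b' = i then xv $ a else N $$ (a,b'))"
        unfolding Kx_def by (rule replace_col_index[OF Nc])
    qed
    finally show ?thesis by simp
  qed
  have vanD: "D \<beta> = 0" if "\<beta> \<subseteq> U" "r < card \<beta>" for \<beta>
    unfolding Ddet[OF that(1)] using vanish[OF A Nc ON] that unfolding U_def r_def by blast
  have vanE: "E \<beta> = 0" if "\<beta> \<subseteq> U" "r < card \<beta>" for \<beta>
    unfolding E_def Kcdet[OF that(1)] using vanish[OF A Kcc OKc] that unfolding U_def r_def by auto
  have vanF: "F \<beta> = 0" if "\<beta> \<subseteq> U" "r < card \<beta>" for \<beta>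
    unfolding F_def Kxdet[OF that(1)] using vanish[OF A Kxc OKx] that unfolding U_def r_def by auto
  have ident: "xv $ i * (\<Sum>\<beta>\<in>Pow U. z ^ (n - card \<beta>) * D \<beta>)
      = (\<Sum>\<beta>\<in>Pow U. z ^ (n - card \<beta>) * E \<beta>) + z * (\<Sum>\<beta>\<in>Pow U. z ^ (n - card \<beta>) * F \<beta>)" for z
  proof -
    define Mz where "Mz = mat n n (\<lambda>(a,b). N $$ (a,b) + (if a = b then z else 0))"
    have Mzc: "Mz \<in> carrier_mat n n" unfolding Mz_def by simp
    have Mzx: "(Mz *\<^sub>v xv) $ a = cv $ a + z * xv $ a" if a: "a < n" for a
    proof -
      have "(Mz *\<^sub>v xv) $ a = (\<Sum>k\<in>{0..<n}. (N $$ (a,k) + (if a = k then z else 0)) * xv $ k)"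
        using a xvc unfolding Mz_def by (auto simp: scalar_prod_def intro!: sum.cong)
      also have "\<dots> = (\<Sum>k<n. N $$ (a,k) * xv $ k + (if k = a then z * xv $ a else 0))"
        unfolding atLeast0LessThan
      proof (rule sum.cong[OF refl])
        fix k show "(N $$ (a,k) + (if a = k then z else 0)) * xv $ k = N $$ (a,k) * xv $ k + (if k = a then z * xv $ a else 0)"
          by (cases "k = a") (auto simp: distrib_right)
      qed
      also have "\<dots> = (\<Sum>k<n. N $$ (a,k) * xv $ k) + z * xv $ a"
        using a by (simp add: sum.distrib)
      finally show ?thesis using NE[OF a] by simp
    qed
    have "xv $ i * det Mz = det (replace_col Mz (Mz *\<^sub>v xv) i)"
      by (rule cramer_lemma_mat[OF Mzc xvc i, symmetric])
    also have "\<dots> = detS U (\<lambda>a b. if b = i then cv $ a + z * xv $ a else N $$ (a,b) + (if a = b then z else 0))"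
      unfolding det_detS[OF replace_col_carrier[OF Mzc]] U_def
    proof (rule detS_cong)
      fix a b assume "a \<in> {0..<n}" "b \<in> {0..<n}"
      hence ab: "a < n" "b < n" by auto
      have "Mz $$ (a,b) = N $$ (a,b) + (if a = b then z else 0)" unfolding Mz_def using ab by simp
      thus "replace_col Mz (Mz *\<^sub>v xv) i $$ (a,b) = (if b = i then cv $ a + z * xv $ a else N $$ (a,b) + (if a = b then z else 0))"
        unfolding replace_col_index[OF Mzc ab] using Mzx[OF ab(1)] xvc ab by simp
    qed
    also have "\<dots> = detS U (\<lambda>a b. if b = i then cv $ a else N $$ (a,b) + (if a = b then z else 0))
        + z * detS U (\<lambda>a b. if b = i then xv $ a else N $$ (a,b) + (if a = b then z else 0))"
      by (rule detS_col_lin) (use i in \<open>auto simp: U_def\<close>)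
    also have "\<dots> = (\<Sum>\<beta>\<in>Pow U. z ^ (n - card \<beta>) * E \<beta>) + z * (\<Sum>\<beta>\<in>Pow U. z ^ (n - card \<beta>) * F \<beta>)"
      unfolding U_def expand_rc[OF i] E_def F_def ..
    finally have 1: "xv $ i * det Mz = \<dots>" .
    have "det Mz = detS U (\<lambda>a b. N $$ (a,b) + (if a = b then z else 0))"
      unfolding det_detS[OF Mzc] U_def by (rule detS_cong) (auto simp: Mz_def)
    also have "\<dots> = (\<Sum>\<beta>\<in>Pow U. z ^ (n - card \<beta>) * D \<beta>)"
      unfolding U_def expand_diag D_def ..
    finally show ?thesis using 1 by simp
  qed
  define P where "P = {\<beta>\<in>Pow U. card \<beta> \<le> r}"
  have finP: "finite P" unfolding P_def U_def by simp
  have restr: "(\<Sum>\<beta>\<in>Pow U. z ^ (n - card \<beta>) * G \<beta>) = z ^ (n - r) * (\<Sum>\<beta>\<in>P. z ^ (r - card \<beta>) * G \<beta>)"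
    if van: "\<And>\<beta>. \<beta> \<subseteq> U \<Longrightarrow> r < card \<beta> \<Longrightarrow> G \<beta> = 0" for G :: "nat set \<Rightarrow> complex" and z :: complex
  proof -
    have "(\<Sum>\<beta>\<in>Pow U. z ^ (n - card \<beta>) * G \<beta>) = (\<Sum>\<beta>\<in>P. z ^ (n - card \<beta>) * G \<beta>)"
    proof (rule sum.mono_neutral_right)
      show "finite (Pow U)" unfolding U_def by simp
      show "P \<subseteq> Pow U" unfolding P_def by auto
      show "\<forall>\<beta>\<in>Pow U - P. z ^ (n - card \<beta>) * G \<beta> = 0"
      proof
        fix \<beta> assume "\<beta> \<in> Pow U - P"
        hence "\<beta> \<subseteq> U" "r < card \<beta>" unfolding P_def by auto
        thus "z ^ (n - card \<beta>) * G \<beta> = 0" using van by simp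
      qed
    qed
    also have "\<dots> = (\<Sum>\<beta>\<in>P. z ^ (n - r) * (z ^ (r - card \<beta>) * G \<beta>))"
    proof (rule sum.cong[OF refl])
      fix \<beta> assume "\<beta> \<in> P"
      hence "card \<beta> \<le> r" unfolding P_def by auto
      hence "n - card \<beta> = (n - r) + (r - card \<beta>)" using rn by simp
      thus "z ^ (n - card \<beta>) * G \<beta> = z ^ (n - r) * (z ^ (r - card \<beta>) * G \<beta>)"
        by (simp add: power_add)
    qed
    finally show ?thesis by (simp add: sum_distrib_left)
  qed
  define \<Phi> where "\<Phi> = (\<lambda>z. xv $ i * (\<Sum>\<beta>\<in>P. z ^ (r - card \<beta>) * D \<beta>)
      - (\<Sum>\<beta>\<in>P. z ^ (r - card \<beta>) * E \<beta>) - z * (\<Sum>\<beta>\<in>P. z ^ (r - card \<beta>) * F \<beta>))"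
  have "\<Phi> z = 0" if z: "z \<noteq> 0" for z
  proof -
    have e1: "(\<Sum>\<beta>\<in>Pow U. z ^ (n - card \<beta>) * D \<beta>) = z ^ (n - r) * (\<Sum>\<beta>\<in>P. z ^ (r - card \<beta>) * D \<beta>)"
      by (rule restr) (rule vanD)
    have e2: "(\<Sum>\<beta>\<in>Pow U. z ^ (n - card \<beta>) * E \<beta>) = z ^ (n - r) * (\<Sum>\<beta>\<in>P. z ^ (r - card \<beta>) * E \<beta>)"
      by (rule restr) (rule vanE)
    have e3: "(\<Sum>\<beta>\<in>Pow U. z ^ (n - card \<beta>) * F \<beta>) = z ^ (n - r) * (\<Sum>\<beta>\<in>P. z ^ (r - card \<beta>) * F \<beta>)"
      by (rule restr) (rule vanF)
    note id2 = ident[of z, unfolded e1 e2 e3]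
    have "z ^ (n - r) * \<Phi> z = 0"
      using id2 unfolding \<Phi>_def
      by (simp add: algebra_simps)
    thus ?thesis using z by simp
  qed
  moreover have "isCont \<Phi> 0" unfolding \<Phi>_def by (intro continuous_intros)
  ultimately have "\<Phi> 0 = 0" using isCont_zero by blast
  moreover have z0: "(\<Sum>\<beta>\<in>P. 0 ^ (r - card \<beta>) * G \<beta>) = (\<Sum>\<beta>\<in>J_set r n. G \<beta>)" for G :: "nat set \<Rightarrow> complex"
  proof -
    have "(\<Sum>\<beta>\<in>P. 0 ^ (r - card \<beta>) * G \<beta>) = (\<Sum>\<beta>\<in>P. if card \<beta> = r then G \<beta> else 0)"
      by (intro sum.cong refl) (auto simp: P_def)
    also have "\<dots> = (\<Sum>\<beta>\<in>{\<beta>\<in>P. card \<beta> = r}. G \<beta>)"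
      by (rule sum.inter_filter[OF finP, symmetric])
    also have "{\<beta>\<in>P. card \<beta> = r} = J_set r n" unfolding P_def J_set_def U_def by auto
    finally show ?thesis .
  qed
  ultimately have eq: "xv $ i * (\<Sum>\<beta>\<in>J_set r n. D \<beta>) = (\<Sum>\<beta>\<in>J_set r n. E \<beta>)"
    unfolding \<Phi>_def by simp
  have finJ: "finite (J_set r n)" by (rule finite_subset[of _ "Pow {0..<n}"]) (auto simp: J_set_def)
  have Dsum: "(\<Sum>\<beta>\<in>J_set r n. D \<beta>) = (\<Sum>\<beta>\<in>J_set r n. det (submatrix (mat_adjoint A * A) \<beta> \<beta>))"
    by (intro sum.cong refl) (auto simp: J_set_def U_def Ddet N_def)
  have Esum: "(\<Sum>\<beta>\<in>J_set r n. E \<beta>) = (\<Sum>\<beta>\<in>J_set_i r n i.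
        det (submatrix (replace_col (mat_adjoint A * A) (col (mat_adjoint A * B) j) i) \<beta> \<beta>))"
  proof -
    have "(\<Sum>\<beta>\<in>J_set r n. E \<beta>) = (\<Sum>\<beta>\<in>J_set r n. if i \<in> \<beta> then det (submatrix Kc \<beta> \<beta>) else 0)"
      by (intro sum.cong refl) (auto simp: J_set_def U_def E_def Kcdet)
    also have "\<dots> = (\<Sum>\<beta>\<in>J_set_i r n i. det (submatrix Kc \<beta> \<beta>))"
      unfolding J_set_i_def by (rule sum.inter_filter[OF finJ, symmetric])
    finally show ?thesis unfolding Kc_def N_def cv_def .
  qed
  have nz: "(\<Sum>\<beta>\<in>J_set r n. det (submatrix (mat_adjoint A * A) \<beta> \<beta>)) \<noteq> 0"
    unfolding r_def by (rule dsum_nz[OF A])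
  from eq nz show ?thesis unfolding Dsum Esum xidx[OF i] r_def[symmetric]
    by (simp add: field_simps)
qed

lemma J_full: "J_set n n = {{0..<n}}"
proof
  show "J_set n n \<subseteq> {{0..<n}}"
  proof
    fix \<beta> assume "\<beta> \<in> J_set n n"
    hence "\<beta> \<subseteq> {0..<n}" "card \<beta> = card {0..<n}" unfolding J_set_def by auto
    hence "\<beta> = {0..<n}" by (intro card_subset_eq) auto
    thus "\<beta> \<in> {{0..<n}}" by simp
  qed
qed (auto simp: J_set_def)

lemma J_full_i: "i < n \<Longrightarrow> J_set_i n n i = {{0..<n}}"
  unfolding J_set_i_def J_full by auto

lemma det_submatrix_full: "K \<in> carrier_mat n n \<Longrightarrow> det (submatrix K {0..<n} {0..<n}) = det K"
  using det_submatrix_detS[of K n "{0..<n}"] det_detS[of K n] by simp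

theorem theorem4p1:
  fixes A B X :: "complex mat" and m n s r :: nat
  assumes A: "A \<in> carrier_mat m n"
    and B: "B \<in> carrier_mat m s"
    and X: "min_norm_ls A B X"
  shows
   "(vec_space.rank m A = r \<and> r \<le> m \<and> m < n \<longrightarrow>
      (\<forall>i<n. \<forall>j<s.
         X $$ (i,j) =
           (\<Sum>\<beta>\<in>J_set_i r n i.
              det (submatrix (replace_col (mat_adjoint A * A) (col (mat_adjoint A * B) j) i) \<beta> \<beta>))
           / (\<Sum>\<beta>\<in>J_set r n. det (submatrix (mat_adjoint A * A) \<beta> \<beta>))))
    \<and>
    (vec_space.rank m A = n \<longrightarrow>
      (\<forall>i<n. \<forall>j<s.
         X $$ (i,j) =
           det (replace_col (mat_adjoint A * A) (col (mat_adjoint A * B) j) i)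
           / det (mat_adjoint A * A)))"
proof (intro conjI impI allI)
  fix i j assume r: "vec_space.rank m A = r \<and> r \<le> m \<and> m < n" and i: "i < n" and j: "j < s"
  show "X $$ (i,j) =
           (\<Sum>\<beta>\<in>J_set_i r n i.
              det (submatrix (replace_col (mat_adjoint A * A) (col (mat_adjoint A * B) j) i) \<beta> \<beta>))
           / (\<Sum>\<beta>\<in>J_set r n. det (submatrix (mat_adjoint A * A) \<beta> \<beta>))"
    using general_formula[OF A B X i j] r by simp
next
  fix i j assume r: "vec_space.rank m A = n" and i: "i < n" and j: "j < s"
  have Nc: "mat_adjoint A * A \<in> carrier_mat n n" using adj_carrier[OF A] A by auto
  have Kc: "replace_col (mat_adjoint A * A) (col (mat_adjoint A * B) j) i \<in> carrier_mat n n"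
    by (rule replace_col_carrier[OF Nc])
  show "X $$ (i,j) =
           det (replace_col (mat_adjoint A * A) (col (mat_adjoint A * B) j) i)
           / det (mat_adjoint A * A)"
    using general_formula[OF A B X i j] unfolding r J_full J_full_i[OF i]
    by (simp add: det_submatrix_full[OF Nc] det_submatrix_full[OF Kc])
qed


end
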